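(* Let $K\ge1$, let $\mathbf{\Phi}\in\mathbb{R}^{m\times n}$ satisfy the RIP of order $2K$ with $\delta:=\delta_{2K}\in(0,1)$. Let $\mathbf{x}\in\mathbb{R}^n$ with $\mathcal{T}=\mathrm{supp}(\mathbf{x})$, $|\mathcal{T}|=K$, let $\kappa:=\max_{i,j\in\mathcal{T}}|x_i|/|x_j|$, let $\mathbf{v}\in\mathbb{R}^m$, $\mathbf{y}=\mathbf{\Phi}\mathbf{x}+\mathbf{v}$, and assume $\mathrm{SNR}\ge\kappa^2\delta^{-3/2}$. Then for every $0\le k\le K-\lceil\delta^{1/2}K\rceil$ (with $k<K$), the OMP residuals satisfy $$\|\mathbf{r}^k\|_2^2-\|\mathbf{r}^{k+1}\|_2^2 \ge (1-7\delta^{1/2})\,\bigl(x^k_{\delta^{1/2}}\bigr)^2.$$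
   Context: $\phi_i$ is the $i$-th column of $\mathbf{\Phi}$. RIP: for an integer $s\ge1$, the isometry constant $\delta_s$ of $\mathbf{\Phi}$ is the smallest $c\in[0,1)$ such that $(1-c)\|\mathbf{z}\|_2^2 \le \|\mathbf{\Phi}\mathbf{z}\|_2^2 \le (1+c)\|\mathbf{z}\|_2^2$ for all $s$-sparse $\mathbf{z}$. $\mathrm{SNR} := \|\mathbf{\Phi}\mathbf{x}\|_2^2/\|\mathbf{v}\|_2^2$. OMP with input $\mathbf{\Phi},\mathbf{y},K$: set $\mathcal{T}^0=\emptyset$, $\mathbf{r}^0=\mathbf{y}$; for $k=1,\dots,K$: choose $t^k \in \arg\max_{i\notin\mathcal{T}^{k-1}} |\langle\phi_i,\mathbf{r}^{k-1}\rangle|$ (ties arbitrary), set $\mathcal{T}^k=\mathcal{T}^{k-1}\cup\{t^k\}$, $\mathbf{x}^k = \arg\min_{\mathrm{supp}(\mathbf{u})\subseteq\mathcal{T}^k}\|\mathbf{y}-\mathbf{\Phi}\mathbf{u}\|_2$, $\mathbf{r}^k=\mathbf{y}-\mathbf{\Phi}\mathbf{x}^k$. For $0\le k\le K$: $\Gamma^k:=\mathcal{T}\setminus\mathcal{T}^k$; for $\tau\in(0,1]$, $x^k_\tau$ denotes the magnitude of the $\lceil\tau K\rceil$-th largest entry (in magnitude) of $\mathbf{x}_{\Gamma^k}$, with $x^k_\tau:=0$ if $\lceil\tau K\rceil>|\Gamma^k|$. *)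

theory Defs
  imports "HOL-Analysis.Analysis" "HOL-Library.Multiset"
begin

definition supp :: "real ^ 'n \<Rightarrow> 'n set" where
  "supp z = {i. z $ i \<noteq> 0}"

definition sparse :: "nat \<Rightarrow> real ^ 'n \<Rightarrow> bool" where
  "sparse s z \<longleftrightarrow> card (supp z) \<le> s"

definition col :: "real ^ 'n ^ 'm \<Rightarrow> 'n \<Rightarrow> real ^ 'm" where
  "col Phi i = (\<chi> r. Phi $ r $ i)"

definition rip_holds :: "real ^ 'n ^ 'm \<Rightarrow> nat \<Rightarrow> real \<Rightarrow> bool" where
  "rip_holds Phi s c \<longleftrightarrow> 0 \<le> c \<and> c < 1 \<and>
     (\<forall>z. sparse s z \<longrightarrow>
        (1 - c) * (norm z)\<^sup>2 \<le> (norm (Phi *v z))\<^sup>2 \<and>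
        (norm (Phi *v z))\<^sup>2 \<le> (1 + c) * (norm z)\<^sup>2)"

definition is_rip_const :: "real ^ 'n ^ 'm \<Rightarrow> nat \<Rightarrow> real \<Rightarrow> bool" where
  "is_rip_const Phi s \<delta> \<longleftrightarrow> rip_holds Phi s \<delta> \<and> (\<forall>c. rip_holds Phi s c \<longrightarrow> \<delta> \<le> c)"

text \<open>A run of OMP with K iterations, selected indices t 1, ..., t K and least-squares
  solutions u 0, ..., u K (with T^k = t ` {1..k}). Ties are resolved arbitrarily,
  i.e. any run satisfying the selection rule is admitted.\<close>
definition omp_run :: "real ^ 'n ^ 'm \<Rightarrow> real ^ 'm \<Rightarrow> nat \<Rightarrow> (nat \<Rightarrow> 'n) \<Rightarrow> (nat \<Rightarrow> real ^ 'n) \<Rightarrow> bool" where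
  "omp_run Phi y K t u \<longleftrightarrow>
     (\<forall>k. 1 \<le> k \<and> k \<le> K \<longrightarrow>
        t k \<notin> t ` {1..<k} \<and>
        (\<forall>i. i \<notin> t ` {1..<k} \<longrightarrow>
           \<bar>col Phi i \<bullet> (y - Phi *v u (k - 1))\<bar> \<le> \<bar>col Phi (t k) \<bullet> (y - Phi *v u (k - 1))\<bar>)) \<and>
     (\<forall>k. k \<le> K \<longrightarrow>
        supp (u k) \<subseteq> t ` {1..k} \<and>
        (\<forall>w. supp w \<subseteq> t ` {1..k} \<longrightarrow> norm (y - Phi *v u k) \<le> norm (y - Phi *v w)))"

definition omp_res :: "real ^ 'n ^ 'm \<Rightarrow> real ^ 'm \<Rightarrow> (nat \<Rightarrow> real ^ 'n) \<Rightarrow> nat \<Rightarrow> real ^ 'm" where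
  "omp_res Phi y u k = y - Phi *v u k"

text \<open>Magnitude of the j-th largest (in magnitude) entry of x restricted to A (j >= 1);
  0 if j exceeds card A.\<close>
definition jth_largest :: "real ^ 'n \<Rightarrow> 'n set \<Rightarrow> nat \<Rightarrow> real" where
  "jth_largest x A j =
     (if 1 \<le> j \<and> j \<le> card A
      then rev (sorted_list_of_multiset (image_mset (\<lambda>i. \<bar>x $ i\<bar>) (mset_set A))) ! (j - 1)
      else 0)"

definition x_tau :: "real ^ 'n \<Rightarrow> nat \<Rightarrow> (nat \<Rightarrow> 'n) \<Rightarrow> nat \<Rightarrow> real \<Rightarrow> real" where
  "x_tau x K t k \<tau> = jth_largest x (supp x - t ` {1..k}) (nat \<lceil>\<tau> * real K\<rceil>)"

definition kappa :: "real ^ 'n \<Rightarrow> real" where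
  "kappa x = Max {\<bar>x $ i\<bar> / \<bar>x $ j\<bar> | i j. i \<in> supp x \<and> j \<in> supp x}"

end

theory Submission
  imports Defs
begin


lemma count_filter_img:
  fixes f :: "'a \<Rightarrow> real"
  assumes "finite A"
  shows "length (filter P (rev (sorted_list_of_multiset (image_mset f (mset_set A))))) = card {i\<in>A. P (f i)}"
proof -
  let ?M = "image_mset f (mset_set A)"
  have "length (filter P (rev (sorted_list_of_multiset ?M))) = size (mset (filter P (rev (sorted_list_of_multiset ?M))))"
    by (rule size_mset[symmetric])
  also have "mset (filter P (rev (sorted_list_of_multiset ?M))) = filter_mset P ?M"
    by simp
  also have "\<dots> = image_mset f (mset_set {i\<in>A. P (f i)})"
    using assms by (simp add: filter_mset_image_mset)
  finally show ?thesis by simp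
qed

lemma top_set:
  fixes f :: "'a \<Rightarrow> real"
  assumes fin: "finite A" and j1: "1 \<le> j" and jA: "j \<le> card A"
  defines "a \<equiv> rev (sorted_list_of_multiset (image_mset f (mset_set A))) ! (j - 1)"
  shows "\<exists>S. S \<subseteq> A \<and> card S = j \<and> (\<forall>i\<in>S. f i \<ge> a) \<and> (\<forall>i\<in>A-S. f i \<le> a) \<and> a \<in> f ` A"
proof -
  define L where "L = sorted_list_of_multiset (image_mset f (mset_set A))"
  define xs where "xs = rev L"
  have lenL: "length L = card A" unfolding L_def
    by (metis mset_sorted_list_of_multiset size_image_mset size_mset size_mset_set)
  have sL: "sorted L" unfolding L_def by simp
  have len: "length xs = card A" using lenL xs_def by simp
  have mono: "xs ! q \<le> xs ! p" if "p \<le> q" "q < card A" for p q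
  proof -
    have "xs ! q = L ! (length L - Suc q)" "xs ! p = L ! (length L - Suc p)"
      using that lenL by (auto simp: xs_def rev_nth)
    moreover have "L ! (length L - Suc q) \<le> L ! (length L - Suc p)"
      using that lenL by (intro sorted_nth_mono[OF sL]) auto
    ultimately show ?thesis by simp
  qed
  have adef: "a = xs ! (j - 1)" unfolding a_def xs_def L_def by simp
  define P where "P = {i\<in>A. f i > a}"
  define Q where "Q = {i\<in>A. f i \<ge> a}"
  have cP: "card P = card {p. p < length xs \<and> xs ! p > a}"
    using count_filter_img[OF fin, of "\<lambda>v. v > a" f] length_filter_conv_card[of "\<lambda>v. v > a" xs]
    unfolding P_def xs_def L_def by simp
  have cQ: "card Q = card {p. p < length xs \<and> xs ! p \<ge> a}"
    using count_filter_img[OF fin, of "\<lambda>v. v \<ge> a" f] length_filter_conv_card[of "\<lambda>v. v \<ge> a" xs]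
    unfolding Q_def xs_def L_def by simp
  have "{p. p < length xs \<and> xs ! p > a} \<subseteq> {0..<j-1}"
  proof
    fix p assume "p \<in> {p. p < length xs \<and> xs ! p > a}"
    then have "p < card A" "xs ! p > a" using len by auto
    then show "p \<in> {0..<j-1}" using mono[of "j-1" p] adef by (cases "j - 1 \<le> p") auto
  qed
  then have cPle: "card P \<le> j - 1" using cP by (metis card_atLeastLessThan card_mono finite_atLeastLessThan minus_nat.diff_0)
  have "{0..<j} \<subseteq> {p. p < length xs \<and> xs ! p \<ge> a}"
  proof
    fix p assume "p \<in> {0..<j}"
    then show "p \<in> {p. p < length xs \<and> xs ! p \<ge> a}" using mono[of p "j-1"] adef len jA j1 by auto
  qed
  then have cQge: "j \<le> card Q" using cQ by (metis card_atLeastLessThan card_mono finite_Collect_conjI finite_Collect_less_nat minus_nat.diff_0)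
  have PQ: "P \<subseteq> Q" unfolding P_def Q_def by auto
  have finQ: "finite Q" using fin Q_def by auto
  have "j - card P \<le> card (Q - P)" using cQge cPle PQ finQ
    by (simp add: card_Diff_subset finite_subset)
  then obtain S' where S': "S' \<subseteq> Q - P" "card S' = j - card P" "finite S'"
    by (meson obtain_subset_with_card_n)
  define S where "S = P \<union> S'"
  have finP: "finite P" using finQ PQ finite_subset by blast
  have "card S = card P + card S'" unfolding S_def using S' finP
    by (subst card_Un_disjoint) auto
  then have cS: "card S = j" using S' cPle j1 by simp
  have "S \<subseteq> A" using S' PQ unfolding S_def Q_def by auto
  moreover have "\<forall>i\<in>S. f i \<ge> a" using S' PQ unfolding S_def Q_def P_def by auto
  moreover have "\<forall>i\<in>A-S. f i \<le> a" unfolding S_def P_def by auto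
  moreover have "a \<in> f ` A"
  proof -
    have "a \<in> set xs" using adef len jA j1 by simp
    then have "a \<in> set_mset (mset xs)" by simp
    then show ?thesis unfolding xs_def L_def using fin by simp
  qed
  ultimately show ?thesis using cS by blast
qed



lemma col_axis: "Phi *v axis i 1 = col Phi i"
  by (simp add: matrix_vector_mult_basis col_def column_def)

lemma mv_inner: "(Phi *v z) \<bullet> r = (\<Sum>i\<in>UNIV. z $ i * (col Phi i \<bullet> r))"
proof -
  have "Phi *v z = (\<Sum>i\<in>UNIV. z $ i *\<^sub>R col Phi i)"
    by (simp add: matrix_mult_sum scalar_mult_eq_scaleR col_def column_def)
  then show ?thesis by (simp add: inner_sum_left)
qed

lemma sparse_sub: "supp (z :: real ^ 'n) \<subseteq> U \<Longrightarrow> card U \<le> s \<Longrightarrow> sparse s z"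
  unfolding sparse_def by (meson card_mono finite le_trans)

lemma rip_lo: "rip_holds Phi s c \<Longrightarrow> sparse s z \<Longrightarrow> (1 - c) * (norm z)\<^sup>2 \<le> (norm (Phi *v z))\<^sup>2"
  unfolding rip_holds_def by blast
lemma rip_hi: "rip_holds Phi s c \<Longrightarrow> sparse s z \<Longrightarrow> (norm (Phi *v z))\<^sup>2 \<le> (1 + c) * (norm z)\<^sup>2"
  unfolding rip_holds_def by blast

lemma sq_add: "(norm (p + q :: 'a::real_inner))\<^sup>2 = (norm p)\<^sup>2 + 2 * (p \<bullet> q) + (norm q)\<^sup>2"
  by (simp add: power2_norm_eq_inner inner_add inner_commute)
lemma sq_diff: "(norm (p - q :: 'a::real_inner))\<^sup>2 = (norm p)\<^sup>2 - 2 * (p \<bullet> q) + (norm q)\<^sup>2"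
  by (simp add: power2_norm_eq_inner inner_diff inner_commute)

lemma polar:
  assumes rip: "rip_holds Phi s c" and sp: "\<And>l. sparse s (a + l *\<^sub>R b)"
  shows "(Phi *v a) \<bullet> (Phi *v b) \<ge> a \<bullet> b - c * norm a * norm b"
proof (cases "a = 0 \<or> b = 0")
  case True then show ?thesis by auto
next
  case False
  then have na: "norm a > 0" and nb: "norm b > 0" by auto
  define l where "l = norm a / norm b"
  have l: "l > 0" using na nb l_def by simp
  define b' where "b' = l *\<^sub>R b"
  have nb': "norm b' = norm a" using nb l unfolding b'_def l_def by simp
  have Pb': "Phi *v b' = l *\<^sub>R (Phi *v b)" unfolding b'_def
    by (simp add: matrix_vector_mult_scaleR)
  have s1: "sparse s (a + b')" using sp[of l] b'_def by simp
  have s2: "sparse s (a - b')" using sp[of "-l"] b'_def by simp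
  have h1: "(1 - c) * (norm (a + b'))\<^sup>2 \<le> (norm (Phi *v a + Phi *v b'))\<^sup>2"
    using rip_lo[OF rip s1] by (simp add: matrix_vector_right_distrib)
  have h2: "(norm (Phi *v a - Phi *v b'))\<^sup>2 \<le> (1 + c) * (norm (a - b'))\<^sup>2"
    using rip_hi[OF rip s2] by (simp add: matrix_vector_mult_diff_distrib)
  have "4 * ((Phi *v a) \<bullet> (Phi *v b')) \<ge> 4 * (a \<bullet> b') - 4 * c * (norm a)\<^sup>2"
    using h1 h2 unfolding sq_add sq_diff nb' by (simp add: algebra_simps)
  then have "l * ((Phi *v a) \<bullet> (Phi *v b)) \<ge> l * (a \<bullet> b) - c * (norm a)\<^sup>2"
    unfolding Pb' by (simp add: b'_def)
  moreover have "(norm a)\<^sup>2 = l * (norm a * norm b)" using nb unfolding l_def by (simp add: power2_eq_square)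
  ultimately have "l * ((Phi *v a) \<bullet> (Phi *v b)) \<ge> l * (a \<bullet> b - c * norm a * norm b)"
    by (simp add: algebra_simps)
  then show ?thesis using l by simp
qed



lemma final_arith:
  fixes e X W V PS PG G a A1 g D ip K :: real
  assumes e0: "0 < e" and e1: "e < 1/7"
    and nn: "X \<ge> 0" "W \<ge> 0" "V \<ge> 0" "PS \<ge> 0" "PG \<ge> 0" "G \<ge> 0" "a > 0" "A1 > 0" "K \<ge> 0"
    and hD: "D \<ge> g\<^sup>2 / (1 + e\<^sup>2)"
    and hip1: "ip \<le> \<bar>g\<bar> * A1"
    and hip2: "ip \<ge> X\<^sup>2 - e\<^sup>2 * X * W - PS * V"
    and hPS: "PS\<^sup>2 \<le> (1 + e\<^sup>2) * X\<^sup>2"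
    and hW: "(1 - e\<^sup>2) * W\<^sup>2 \<le> (PG + 2 * V)\<^sup>2"
    and hPG: "PG\<^sup>2 \<le> (1 + e\<^sup>2) * G\<^sup>2"
    and hG: "G\<^sup>2 \<le> X\<^sup>2 + K * a\<^sup>2"
    and hK: "e * K * a\<^sup>2 \<le> X\<^sup>2"
    and hA: "a * A1 \<le> X\<^sup>2"
    and hV: "V\<^sup>2 \<le> e\<^sup>2 * (1 + e\<^sup>2) * X\<^sup>2"
  shows "D \<ge> (1 - 7 * e) * a\<^sup>2"
proof -
  have e2: "e\<^sup>2 \<le> e / 7" using e0 e1 by (simp add: power2_eq_square)
  have ep: "1 + e\<^sup>2 \<le> 2" using e2 e1 by linarith
  have ep2: "1 + e\<^sup>2 \<le> 50/49" using e2 e1 by linarith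
  have e2': "e\<^sup>2 \<le> 1/49" using e2 e1 by linarith
  have a1: "e * G\<^sup>2 \<le> 2 * X\<^sup>2"
  proof -
    have "e * G\<^sup>2 \<le> e * X\<^sup>2 + e * K * a\<^sup>2" using hG e0 by (simp add: mult_left_mono distrib_left[symmetric] mult.assoc)
    also have "e * X\<^sup>2 \<le> X\<^sup>2" using e0 e1 by (intro mult_left_le_one_le) auto
    finally show ?thesis using hK by linarith
  qed
  have b1: "(PG + 2 * V)\<^sup>2 \<le> 2 * PG\<^sup>2 + 8 * V\<^sup>2"
  proof -
    have "0 \<le> (PG - 2 * V)\<^sup>2" by simp
    moreover have "(PG - 2 * V)\<^sup>2 = PG\<^sup>2 - 4 * (PG * V) + 4 * V\<^sup>2" by (simp add: power2_eq_square algebra_simps)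
    moreover have "(PG + 2 * V)\<^sup>2 = PG\<^sup>2 + 4 * (PG * V) + 4 * V\<^sup>2" by (simp add: power2_eq_square algebra_simps)
    ultimately show ?thesis by linarith
  qed
  have b2: "(1 - e\<^sup>2) * W\<^sup>2 \<le> 2 * (1 + e\<^sup>2) * G\<^sup>2 + 8 * (e\<^sup>2 * (1 + e\<^sup>2) * X\<^sup>2)"
    using hW b1 hPG hV by linarith
  have c1: "e * ((1 - e\<^sup>2) * W\<^sup>2) \<le> 4 * (1 + e\<^sup>2) * X\<^sup>2 + 8 * e * (e\<^sup>2 * (1 + e\<^sup>2) * X\<^sup>2)"
  proof -
    have "e * ((1 - e\<^sup>2) * W\<^sup>2) \<le> e * (2 * (1 + e\<^sup>2) * G\<^sup>2 + 8 * (e\<^sup>2 * (1 + e\<^sup>2) * X\<^sup>2))"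
      using b2 e0 by (simp add: mult_left_mono)
    also have "\<dots> = 2 * (1 + e\<^sup>2) * (e * G\<^sup>2) + 8 * e * (e\<^sup>2 * (1 + e\<^sup>2) * X\<^sup>2)" by (simp add: algebra_simps)
    also have "2 * (1 + e\<^sup>2) * (e * G\<^sup>2) \<le> 2 * (1 + e\<^sup>2) * (2 * X\<^sup>2)"
      using a1 by (intro mult_left_mono) auto
    finally show ?thesis by (simp add: algebra_simps)
  qed
  have c2: "e * ((1 - e\<^sup>2) * W\<^sup>2) \<le> (240/49) * X\<^sup>2"
  proof -
    have "8 * e * (e\<^sup>2 * (1 + e\<^sup>2) * X\<^sup>2) \<le> 8 * 1 * ((1/49) * (50/49) * X\<^sup>2)"
      using e0 e1 e2' ep2 nn by (intro mult_mono) (auto intro!: mult_mono)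
    moreover have "4 * (1 + e\<^sup>2) * X\<^sup>2 \<le> 4 * (50/49) * X\<^sup>2"
      using ep2 by (intro mult_mono) auto
    ultimately show ?thesis using c1 zero_le_power2[of X] by linarith
  qed
  have c3: "(e\<^sup>2 * W)\<^sup>2 \<le> (e * X)\<^sup>2"
  proof -
    have q: "1 - e\<^sup>2 \<ge> 48/49" using e2' by linarith
    have "(e\<^sup>2 * W)\<^sup>2 = e^3 * (e * W\<^sup>2)" by (simp add: power2_eq_square power3_eq_cube)
    also have "e * W\<^sup>2 \<le> 5 * X\<^sup>2"
    proof -
      have "e * W\<^sup>2 * (48/49) \<le> e * W\<^sup>2 * (1 - e\<^sup>2)" using q e0 by (intro mult_left_mono) auto
      then show ?thesis using c2 by (simp add: algebra_simps)
    qed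
    then have "e^3 * (e * W\<^sup>2) \<le> e^3 * (5 * X\<^sup>2)" using e0 by (intro mult_left_mono) auto
    also have "e^3 * (5 * X\<^sup>2) = e\<^sup>2 * X\<^sup>2 * (5 * e)" by (simp add: power2_eq_square power3_eq_cube)
    also have "\<dots> \<le> e\<^sup>2 * X\<^sup>2 * 1" using e1 by (intro mult_left_mono) auto
    finally show ?thesis by (simp add: power_mult_distrib)
  qed
  have c4: "e\<^sup>2 * W \<le> e * X" using power2_le_imp_le[OF c3] e0 nn by simp
  have d1: "(PS * V)\<^sup>2 \<le> (2 * e * X\<^sup>2)\<^sup>2"
  proof -
    have "(PS * V)\<^sup>2 = PS\<^sup>2 * V\<^sup>2" by (simp add: power_mult_distrib)
    also have "\<dots> \<le> ((1 + e\<^sup>2) * X\<^sup>2) * (e\<^sup>2 * (1 + e\<^sup>2) * X\<^sup>2)"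
      using hPS hV by (intro mult_mono) auto
    also have "\<dots> = (e * X\<^sup>2)\<^sup>2 * ((1 + e\<^sup>2) * (1 + e\<^sup>2))" by (simp add: power2_eq_square algebra_simps)
    also have "\<dots> \<le> (e * X\<^sup>2)\<^sup>2 * (2 * 2)" using ep by (intro mult_left_mono mult_mono) auto
    finally show ?thesis by (simp add: power2_eq_square algebra_simps)
  qed
  have d2: "PS * V \<le> 2 * e * X\<^sup>2" using power2_le_imp_le[OF d1] e0 nn by simp
  have e3: "ip \<ge> (1 - 3 * e) * X\<^sup>2"
  proof -
    have "e\<^sup>2 * X * W = X * (e\<^sup>2 * W)" by simp
    also have "\<dots> \<le> X * (e * X)" using c4 nn by (intro mult_left_mono) auto
    finally have "e\<^sup>2 * X * W \<le> e * X\<^sup>2" by (simp add: power2_eq_square algebra_simps)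
    then show ?thesis using hip2 d2 by (simp add: algebra_simps)
  qed
  have f1: "(1 - 3 * e) * (a * A1) \<le> \<bar>g\<bar> * A1"
  proof -
    have "(1 - 3 * e) * (a * A1) \<le> (1 - 3 * e) * X\<^sup>2" using hA e1 by (intro mult_left_mono) auto
    then show ?thesis using e3 hip1 by linarith
  qed
  have f2: "(1 - 3 * e) * a \<le> \<bar>g\<bar>"
  proof (rule mult_right_le_imp_le)
    show "((1 - 3 * e) * a) * A1 \<le> \<bar>g\<bar> * A1" using f1 by (simp add: mult.assoc)
    show "0 < A1" using nn by simp
  qed
  have f3: "((1 - 3 * e) * a)\<^sup>2 \<le> g\<^sup>2"
  proof -
    have "((1 - 3 * e) * a)\<^sup>2 \<le> \<bar>g\<bar>\<^sup>2" using f2 e1 nn by (intro power_mono) auto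
    then show ?thesis by simp
  qed
  have g1: "(1 - 7 * e) * (1 + e\<^sup>2) \<le> (1 - 3 * e)\<^sup>2"
  proof -
    have "(1 - 3 * e)\<^sup>2 - (1 - 7 * e) * (1 + e\<^sup>2) = e + 8 * e\<^sup>2 + 7 * e^3"
      by (simp add: power2_eq_square power3_eq_cube algebra_simps)
    moreover have "e + 8 * e\<^sup>2 + 7 * e^3 \<ge> 0" using e0 by simp
    ultimately show ?thesis by linarith
  qed
  have "(1 - 7 * e) * a\<^sup>2 \<le> (1 - 3 * e)\<^sup>2 * a\<^sup>2 / (1 + e\<^sup>2)"
  proof -
    have "(1 - 7 * e) * a\<^sup>2 * (1 + e\<^sup>2) \<le> (1 - 3 * e)\<^sup>2 * a\<^sup>2"
      using mult_right_mono[OF g1, of "a\<^sup>2"] by (simp add: algebra_simps)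
    moreover have "0 < 1 + e\<^sup>2" by (simp add: add_pos_nonneg)
    ultimately show ?thesis by (simp add: pos_le_divide_eq)
  qed
  also have "\<dots> \<le> g\<^sup>2 / (1 + e\<^sup>2)" using f3 by (intro divide_right_mono) (auto simp: power_mult_distrib)
  finally show ?thesis using hD by linarith
qed

lemma supp_lin: "supp (p + l *\<^sub>R q) \<subseteq> supp p \<union> supp q"
  by (auto simp: supp_def)

lemma restr_inner: "(\<chi> i. if i \<in> S then z $ i else 0) \<bullet> (w :: real ^ 'n) = (\<Sum>i\<in>S. z $ i * w $ i)"
proof -
  have "(\<chi> i. if i \<in> S then z $ i else 0) \<bullet> w = (\<Sum>i\<in>UNIV. if i \<in> S then z $ i * w $ i else 0)"
    unfolding inner_vec_def by (intro sum.cong refl) auto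
  also have "\<dots> = (\<Sum>i\<in>S. z $ i * w $ i)"
    using sum.inter_restrict[of "UNIV :: 'n set" "\<lambda>i. z $ i * w $ i" S] by simp
  finally show ?thesis .
qed

lemma restr_mv: fixes Phi :: "real ^ 'n ^ 'm" shows "(Phi *v (\<chi> i. if i \<in> S then z $ i else 0)) \<bullet> r = (\<Sum>i\<in>S. z $ i * (col Phi i \<bullet> r))"
proof -
  have "(Phi *v (\<chi> i. if i \<in> S then z $ i else 0)) \<bullet> r = (\<Sum>i\<in>UNIV. if i \<in> S then z $ i * (col Phi i \<bullet> r) else 0)"
    unfolding mv_inner by (intro sum.cong refl) auto
  also have "\<dots> = (\<Sum>i\<in>S. z $ i * (col Phi i \<bullet> r))"
    using sum.inter_restrict[of "UNIV :: 'n set" "\<lambda>i. z $ i * (col Phi i \<bullet> r)" S] by simp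
  finally show ?thesis .
qed

lemma norm_restr: "(norm (\<chi> i. if i \<in> S then (z :: real ^ 'n) $ i else 0))\<^sup>2 = (\<Sum>i\<in>S. (z $ i)\<^sup>2)"
proof -
  have "(norm (\<chi> i. if i \<in> S then z $ i else 0))\<^sup>2 = (\<chi> i. if i \<in> S then z $ i else 0) \<bullet> (\<chi> i. if i \<in> S then z $ i else 0)"
    by (simp add: power2_norm_eq_inner)
  also have "\<dots> = (\<Sum>i\<in>S. (z $ i)\<^sup>2)" unfolding restr_inner by (simp add: power2_eq_square)
  finally show ?thesis .
qed

lemma powr_e: assumes "0 < (d::real)" shows "d powr (-3/2) * (sqrt d)^3 = 1"
proof -
  have "d powr (3/2) = d powr (1 + 1/2)" by simp
  also have "\<dots> = d powr 1 * d powr (1/2)" by (rule powr_add)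
  also have "\<dots> = d * sqrt d" using assms by (simp add: powr_half_sqrt)
  finally have h: "d powr (3/2) = d * sqrt d" .
  have "(sqrt d)^3 = d * sqrt d" using assms by (simp add: power3_eq_cube)
  moreover have "d powr (-3/2) = 1 / d powr (3/2)" using powr_minus_divide[of d "3/2"] by simp
  ultimately show ?thesis using h assms by simp
qed

theorem proposition2:
  fixes Phi :: "real ^ 'n ^ 'm" and x :: "real ^ 'n" and v y :: "real ^ 'm"
    and K :: nat and \<delta> :: real and t :: "nat \<Rightarrow> 'n" and u :: "nat \<Rightarrow> real ^ 'n" and k :: nat
  assumes "K \<ge> 1"
    and "is_rip_const Phi (2 * K) \<delta>" and "0 < \<delta>" and "\<delta> < 1"
    and "card (supp x) = K"
    and "y = Phi *v x + v"
    and "(norm (Phi *v x))\<^sup>2 \<ge> (kappa x)\<^sup>2 * \<delta> powr (-3/2) * (norm v)\<^sup>2"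
    and "omp_run Phi y K t u"
    and "k \<le> K - nat \<lceil>sqrt \<delta> * real K\<rceil>" and "k < K"
  shows "(norm (omp_res Phi y u k))\<^sup>2 - (norm (omp_res Phi y u (k + 1)))\<^sup>2
           \<ge> (1 - 7 * sqrt \<delta>) * (x_tau x K t k (sqrt \<delta>))\<^sup>2"
proof -
  define e where "e = sqrt \<delta>"
  have e0: "0 < e" using assms(3) e_def by simp
  have de: "\<delta> = e\<^sup>2" using assms(3) e_def by simp
  have rip: "rip_holds Phi (2 * K) \<delta>" using assms(2) is_rip_const_def by blast
  note om = assms(8)[unfolded omp_run_def]
  have om1: "\<And>k'. 1 \<le> k' \<Longrightarrow> k' \<le> K \<Longrightarrow> (\<forall>i. i \<notin> t ` {1..<k'} \<longrightarrow>
           \<bar>col Phi i \<bullet> (y - Phi *v u (k' - 1))\<bar> \<le> \<bar>col Phi (t k') \<bullet> (y - Phi *v u (k' - 1))\<bar>)"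
    using om by blast
  have om2: "\<And>k'. k' \<le> K \<Longrightarrow> supp (u k') \<subseteq> t ` {1..k'} \<and>
        (\<forall>w. supp w \<subseteq> t ` {1..k'} \<longrightarrow> norm (y - Phi *v u k') \<le> norm (y - Phi *v w))"
    using om by blast
  define Tk where "Tk = t ` {1..k}"
  define r where "r = y - Phi *v u k"
  define r' where "r' = y - Phi *v u (k + 1)"
  define tt where "tt = t (k + 1)"
  define g where "g = col Phi tt \<bullet> r"
  define D where "D = (norm r)\<^sup>2 - (norm r')\<^sup>2"
  have kK: "k + 1 \<le> K" using assms(10) by simp
  have suppk: "supp (u k) \<subseteq> Tk" using om2[of k] kK Tk_def by simp
  have optk: "\<And>w. supp w \<subseteq> Tk \<Longrightarrow> norm r \<le> norm (y - Phi *v w)"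
    using om2[of k] kK unfolding Tk_def r_def by auto
  have sel: "\<And>i. i \<notin> Tk \<Longrightarrow> \<bar>col Phi i \<bullet> r\<bar> \<le> \<bar>g\<bar>"
  proof -
    fix i assume "i \<notin> Tk"
    moreover have "{1..<k+1} = {1..k}" by auto
    ultimately show "\<bar>col Phi i \<bullet> r\<bar> \<le> \<bar>g\<bar>"
      using om1[of "k+1"] kK unfolding Tk_def r_def g_def tt_def by auto
  qed
  have phin: "(norm (col Phi tt))\<^sup>2 \<le> 1 + \<delta>"
  proof -
    have sp: "sparse (2 * K) (axis tt (1::real))"
      by (rule sparse_sub[of _ "{tt}"]) (use assms(1) in \<open>auto simp: supp_def axis_def\<close>)
    show ?thesis using rip_hi[OF rip sp] by (simp add: col_axis)
  qed
  have stepA: "D \<ge> g\<^sup>2 / (1 + \<delta>)"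
  proof -
    define c where "c = g / (1 + \<delta>)"
    have "supp (u k + c *\<^sub>R axis tt 1) \<subseteq> t ` {1..k+1}"
    proof -
      have "supp (u k + c *\<^sub>R axis tt 1) \<subseteq> supp (u k) \<union> supp (axis tt (1::real))" by (rule supp_lin)
      moreover have "supp (axis tt (1::real)) \<subseteq> {tt}" by (auto simp: supp_def axis_def)
      moreover have "Tk \<subseteq> t ` {1..k+1}" "tt \<in> t ` {1..k+1}" unfolding Tk_def tt_def by auto
      ultimately show ?thesis using suppk by blast
    qed
    then have "norm r' \<le> norm (y - Phi *v (u k + c *\<^sub>R axis tt 1))"
      using om2[of "k+1"] kK unfolding r'_def by blast
    also have "y - Phi *v (u k + c *\<^sub>R axis tt 1) = r - c *\<^sub>R col Phi tt"
      by (simp add: r_def matrix_vector_right_distrib matrix_vector_mult_scaleR col_axis algebra_simps)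
    finally have "(norm r')\<^sup>2 \<le> (norm (r - c *\<^sub>R col Phi tt))\<^sup>2" by (simp add: power_mono)
    also have "\<dots> = (norm r)\<^sup>2 - 2 * c * g + c\<^sup>2 * (norm (col Phi tt))\<^sup>2"
      unfolding sq_diff g_def by (simp add: inner_commute power_mult_distrib)
    also have "\<dots> \<le> (norm r)\<^sup>2 - 2 * c * g + c\<^sup>2 * (1 + \<delta>)" using phin by (simp add: mult_left_mono)
    also have "\<dots> = (norm r)\<^sup>2 - g\<^sup>2 / (1 + \<delta>)" unfolding c_def
    proof -
      define q where "q = 1 + \<delta>"
      have "q > 0" using assms(3) q_def by simp
      then have "(norm r)\<^sup>2 - 2 * (g / q) * g + (g / q)\<^sup>2 * q = (norm r)\<^sup>2 - g\<^sup>2 / q"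
        by (simp add: field_simps power2_eq_square)
      then show "(norm r)\<^sup>2 - 2 * (g / (1 + \<delta>)) * g + (g / (1 + \<delta>))\<^sup>2 * (1 + \<delta>) = (norm r)\<^sup>2 - g\<^sup>2 / (1 + \<delta>)"
        unfolding q_def .
    qed
    finally show ?thesis unfolding D_def by simp
  qed
  have D0: "D \<ge> 0"
  proof -
    have "0 \<le> g\<^sup>2 / (1 + \<delta>)" using assms(3) by simp
    then show ?thesis using stepA by linarith
  qed
  have goalD: "(norm (omp_res Phi y u k))\<^sup>2 - (norm (omp_res Phi y u (k + 1)))\<^sup>2 = D"
    unfolding D_def r_def r'_def omp_res_def by simp
  define s where "s = nat \<lceil>e * real K\<rceil>"
  define \<Gamma> where "\<Gamma> = supp x - Tk"
  have xt: "x_tau x K t k (sqrt \<delta>) = jth_largest x \<Gamma> s"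
    unfolding x_tau_def \<Gamma>_def Tk_def s_def e_def by simp
  show ?thesis
  proof (cases "e < 1/7 \<and> 1 \<le> s \<and> s \<le> card \<Gamma>")
    case False
    have "(1 - 7 * sqrt \<delta>) * (x_tau x K t k (sqrt \<delta>))\<^sup>2 \<le> 0"
    proof (cases "e < 1/7")
      case True
      then have "x_tau x K t k (sqrt \<delta>) = 0" using False xt unfolding jth_largest_def by auto
      then show ?thesis by simp
    next
      case False
      then have "1 - 7 * sqrt \<delta> \<le> 0" using e_def by simp
      then show ?thesis by (simp add: mult_nonpos_nonneg)
    qed
    then show ?thesis using D0 goalD by linarith
  next
    case True
    have e1: "e < 1/7" and s1: "1 \<le> s" and sG: "s \<le> card \<Gamma>" using True by auto
    have finG: "finite \<Gamma>" by simp
    define a where "a = rev (sorted_list_of_multiset (image_mset (\<lambda>i. \<bar>x $ i\<bar>) (mset_set \<Gamma>))) ! (s - 1)"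
    have xa: "x_tau x K t k (sqrt \<delta>) = a" using xt s1 sG unfolding jth_largest_def a_def by simp
    obtain S where S: "S \<subseteq> \<Gamma>" "card S = s" "\<forall>i\<in>S. \<bar>x $ i\<bar> \<ge> a" "\<forall>i\<in>\<Gamma>-S. \<bar>x $ i\<bar> \<le> a"
        "a \<in> (\<lambda>i. \<bar>x $ i\<bar>) ` \<Gamma>"
      using top_set[OF finG s1 sG, of "\<lambda>i. \<bar>x $ i\<bar>"] unfolding a_def by blast
    obtain i0 where i0: "i0 \<in> \<Gamma>" "a = \<bar>x $ i0\<bar>" using S(5) by auto
    have Gsupp: "\<Gamma> \<subseteq> supp x" unfolding \<Gamma>_def by auto
    have GTk: "\<And>i. i \<in> \<Gamma> \<Longrightarrow> i \<notin> Tk" unfolding \<Gamma>_def by auto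
    have a0: "a > 0" using i0 Gsupp by (auto simp: supp_def)
    have cardT: "card (supp x) = K" using assms(5) .
    have cardTk: "card Tk \<le> k" unfolding Tk_def using card_image_le[of "{1..k}" t] by simp
    have cardU: "card (supp x \<union> Tk) \<le> 2 * K" using card_Un_le[of "supp x" Tk] cardT cardTk kK by linarith
    define xS where "xS = (\<chi> i. if i \<in> S then x $ i else 0)"
    define xG where "xG = (\<chi> i. if i \<in> \<Gamma> then x $ i else 0)"
    define xT where "xT = (\<chi> i. if i \<in> Tk then x $ i else 0)"
    define w where "w = x - u k"
    define X where "X = norm xS"
    define W where "W = norm w"
    define V where "V = norm v"
    define PS where "PS = norm (Phi *v xS)"
    define PG where "PG = norm (Phi *v xG)"
    define G where "G = norm xG"
    define A1 where "A1 = (\<Sum>i\<in>S. \<bar>x $ i\<bar>)"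
    define ip where "ip = (Phi *v xS) \<bullet> r"
    have finS: "finite S" by simp
    have X2: "X\<^sup>2 = (\<Sum>i\<in>S. (x $ i)\<^sup>2)" unfolding X_def xS_def by (rule norm_restr)
    have G2: "G\<^sup>2 = (\<Sum>i\<in>\<Gamma>. (x $ i)\<^sup>2)" unfolding G_def xG_def by (rule norm_restr)
    have hip1: "ip \<le> \<bar>g\<bar> * A1"
    proof -
      have "ip = (\<Sum>i\<in>S. x $ i * (col Phi i \<bullet> r))" unfolding ip_def xS_def by (rule restr_mv)
      also have "\<dots> \<le> (\<Sum>i\<in>S. \<bar>x $ i\<bar> * \<bar>g\<bar>)"
      proof (rule sum_mono)
        fix i assume iS: "i \<in> S"
        have "x $ i * (col Phi i \<bullet> r) \<le> \<bar>x $ i\<bar> * \<bar>col Phi i \<bullet> r\<bar>" by (simp add: abs_mult[symmetric])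
        also have "\<dots> \<le> \<bar>x $ i\<bar> * \<bar>g\<bar>" using sel[OF GTk] iS S(1) by (intro mult_left_mono) auto
        finally show "x $ i * (col Phi i \<bullet> r) \<le> \<bar>x $ i\<bar> * \<bar>g\<bar>" .
      qed
      also have "\<dots> = \<bar>g\<bar> * A1" unfolding A1_def by (simp add: sum_distrib_left mult.commute)
      finally show ?thesis .
    qed
    have hA: "a * A1 \<le> X\<^sup>2"
    proof -
      have "a * A1 = (\<Sum>i\<in>S. a * \<bar>x $ i\<bar>)" unfolding A1_def by (simp add: sum_distrib_left)
      also have "\<dots> \<le> (\<Sum>i\<in>S. (x $ i)\<^sup>2)"
      proof (rule sum_mono)
        fix i assume "i \<in> S"
        then have "a * \<bar>x $ i\<bar> \<le> \<bar>x $ i\<bar> * \<bar>x $ i\<bar>" using S(3) by (intro mult_right_mono) auto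
        then show "a * \<bar>x $ i\<bar> \<le> (x $ i)\<^sup>2" by (simp add: power2_eq_square)
      qed
      finally show ?thesis using X2 by simp
    qed
    have hs: "real s * a\<^sup>2 \<le> X\<^sup>2"
    proof -
      have "(\<Sum>i\<in>S. a\<^sup>2) \<le> (\<Sum>i\<in>S. (x $ i)\<^sup>2)"
      proof (rule sum_mono)
        fix i assume "i \<in> S"
        then have "a\<^sup>2 \<le> \<bar>x $ i\<bar>\<^sup>2" using S(3) a0 by (intro power_mono) auto
        then show "a\<^sup>2 \<le> (x $ i)\<^sup>2" by simp
      qed
      then show ?thesis using X2 S(2) by simp
    qed
    have A1pos: "A1 > 0"
    proof -
      have "(\<Sum>i\<in>S. a) \<le> A1" unfolding A1_def using S(3) by (intro sum_mono) auto
      moreover have "(\<Sum>i\<in>S. a) = real s * a" using S(2) by simp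
      moreover have "real s * a > 0" using s1 a0 by simp
      ultimately show ?thesis by linarith
    qed
    have hK: "e * real K * a\<^sup>2 \<le> X\<^sup>2"
    proof -
      have "e * real K \<le> real s" unfolding s_def by (rule of_nat_ceiling)
      then have "e * real K * a\<^sup>2 \<le> real s * a\<^sup>2" by (intro mult_right_mono) auto
      then show ?thesis using hs by linarith
    qed
    have r_eq: "r = Phi *v w + v" unfolding r_def w_def assms(6)
      by (simp add: matrix_vector_mult_diff_distrib algebra_simps)
    have xSw: "xS \<bullet> w = X\<^sup>2"
    proof -
      have "xS \<bullet> w = (\<Sum>i\<in>S. x $ i * w $ i)" unfolding xS_def by (rule restr_inner)
      also have "\<dots> = (\<Sum>i\<in>S. (x $ i)\<^sup>2)"
      proof (rule sum.cong)
        fix i assume "i \<in> S"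
        then have "i \<notin> supp (u k)" using suppk GTk S(1) by blast
        then have "u k $ i = 0" by (simp add: supp_def)
        then show "x $ i * w $ i = (x $ i)\<^sup>2" unfolding w_def by (simp add: power2_eq_square)
      qed simp
      finally show ?thesis using X2 by simp
    qed
    have sxS: "supp xS \<subseteq> supp x \<union> Tk" using S(1) Gsupp by (auto simp: supp_def xS_def)
    have sxG: "supp xG \<subseteq> supp x \<union> Tk" using Gsupp by (auto simp: supp_def xG_def)
    have sw: "supp w \<subseteq> supp x \<union> Tk" using suppk by (auto simp: supp_def w_def)
    have sxT: "supp xT \<subseteq> Tk" by (auto simp: supp_def xT_def)
    have spU: "\<And>z. supp z \<subseteq> supp x \<union> Tk \<Longrightarrow> sparse (2 * K) z"
      using sparse_sub cardU by blast
    have pol: "(Phi *v xS) \<bullet> (Phi *v w) \<ge> xS \<bullet> w - \<delta> * norm xS * norm w"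
    proof (rule polar[OF rip])
      fix l show "sparse (2 * K) (xS + l *\<^sub>R w)"
        using supp_lin[of xS l w] sxS sw by (intro spU) blast
    qed
    have hip2: "ip \<ge> X\<^sup>2 - e\<^sup>2 * X * W - PS * V"
    proof -
      have "ip = (Phi *v xS) \<bullet> (Phi *v w) + (Phi *v xS) \<bullet> v" unfolding ip_def r_eq by (simp add: inner_add_right)
      moreover have "\<bar>(Phi *v xS) \<bullet> v\<bar> \<le> PS * V" unfolding PS_def V_def by (rule Cauchy_Schwarz_ineq2)
      then have "-(PS * V) \<le> (Phi *v xS) \<bullet> v" by linarith
      moreover have "(Phi *v xS) \<bullet> (Phi *v w) \<ge> X\<^sup>2 - e\<^sup>2 * X * W"
        using pol xSw de unfolding X_def W_def by simp
      ultimately show ?thesis by linarith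
    qed
    have hPS: "PS\<^sup>2 \<le> (1 + e\<^sup>2) * X\<^sup>2" unfolding PS_def X_def de[symmetric]
      by (rule rip_hi[OF rip spU[OF sxS]])
    have hPG: "PG\<^sup>2 \<le> (1 + e\<^sup>2) * G\<^sup>2" unfolding PG_def G_def de[symmetric]
      by (rule rip_hi[OF rip spU[OF sxG]])
    have hW: "(1 - e\<^sup>2) * W\<^sup>2 \<le> (PG + 2 * V)\<^sup>2"
    proof -
      have lo: "(1 - e\<^sup>2) * W\<^sup>2 \<le> (norm (Phi *v w))\<^sup>2" unfolding W_def de[symmetric]
        by (rule rip_lo[OF rip spU[OF sw]])
      have "x - xT = xG" by (auto simp: vec_eq_iff xT_def xG_def \<Gamma>_def supp_def)
      then have yx: "y - Phi *v xT = Phi *v xG + v" unfolding assms(6)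
        by (simp add: matrix_vector_mult_diff_distrib[symmetric] algebra_simps)
      have "norm r \<le> norm (y - Phi *v xT)" using optk[OF sxT] .
      also have "\<dots> \<le> PG + V" unfolding yx PG_def V_def by (rule norm_triangle_ineq)
      finally have nr: "norm r \<le> PG + V" .
      have "norm (Phi *v w) = norm (r - v)" using r_eq by simp
      also have "\<dots> \<le> norm r + V" unfolding V_def by (rule norm_triangle_ineq4)
      finally have "norm (Phi *v w) \<le> PG + 2 * V" using nr by linarith
      then have "(norm (Phi *v w))\<^sup>2 \<le> (PG + 2 * V)\<^sup>2" by (intro power_mono) auto
      then show ?thesis using lo by linarith
    qed
    have hG: "G\<^sup>2 \<le> X\<^sup>2 + real K * a\<^sup>2"
    proof -
      have "G\<^sup>2 = (\<Sum>i\<in>\<Gamma> - S. (x $ i)\<^sup>2) + (\<Sum>i\<in>S. (x $ i)\<^sup>2)"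
        unfolding G2 using sum.subset_diff[OF S(1) finG] by simp
      moreover have "(\<Sum>i\<in>\<Gamma> - S. (x $ i)\<^sup>2) \<le> (\<Sum>i\<in>\<Gamma> - S. a\<^sup>2)"
      proof (rule sum_mono)
        fix i assume "i \<in> \<Gamma> - S"
        then have "\<bar>x $ i\<bar>\<^sup>2 \<le> a\<^sup>2" using S(4) by (intro power_mono) auto
        then show "(x $ i)\<^sup>2 \<le> a\<^sup>2" by simp
      qed
      moreover have "(\<Sum>i\<in>\<Gamma> - S. a\<^sup>2) \<le> real K * a\<^sup>2"
      proof -
        have "card (\<Gamma> - S) \<le> K" using card_mono[of "supp x" "\<Gamma> - S"] Gsupp cardT by auto
        then show ?thesis by (simp add: mult_right_mono)
      qed
      ultimately show ?thesis using X2 by linarith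
    qed
    have hV: "V\<^sup>2 \<le> e\<^sup>2 * (1 + e\<^sup>2) * X\<^sup>2"
    proof -
      define \<kappa> where "\<kappa> = kappa x"
      have finK: "finite {\<bar>x $ i\<bar> / \<bar>x $ j\<bar> | i j. i \<in> supp x \<and> j \<in> supp x}"
      proof (rule finite_subset)
        show "{\<bar>x $ i\<bar> / \<bar>x $ j\<bar> | i j. i \<in> supp x \<and> j \<in> supp x} \<subseteq> (\<lambda>(i, j). \<bar>x $ i\<bar> / \<bar>x $ j\<bar>) ` UNIV"
          by auto
      qed simp
      have i0s: "i0 \<in> supp x" using i0 Gsupp by auto
      have kb: "\<And>j. j \<in> supp x \<Longrightarrow> \<bar>x $ j\<bar> / a \<le> \<kappa>"
        unfolding \<kappa>_def kappa_def using i0 i0s by (intro Max_ge[OF finK]) auto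
      have k1: "\<kappa> \<ge> 1" using kb[OF i0s] i0 a0 by simp
      have kb2: "\<And>j. j \<in> supp x \<Longrightarrow> (x $ j)\<^sup>2 \<le> \<kappa>\<^sup>2 * a\<^sup>2"
      proof -
        fix j assume "j \<in> supp x"
        then have "\<bar>x $ j\<bar> \<le> \<kappa> * a" using kb a0 by (simp add: divide_le_eq)
        then have "\<bar>x $ j\<bar>\<^sup>2 \<le> (\<kappa> * a)\<^sup>2" by (intro power_mono) auto
        then show "(x $ j)\<^sup>2 \<le> \<kappa>\<^sup>2 * a\<^sup>2" by (simp add: power_mult_distrib)
      qed
      have xeq: "x = (\<chi> i. if i \<in> supp x then x $ i else 0)" by (auto simp: vec_eq_iff supp_def)
      have "(norm x)\<^sup>2 = (\<Sum>i\<in>supp x. (x $ i)\<^sup>2)" by (subst xeq, rule norm_restr)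
      also have "\<dots> \<le> (\<Sum>i\<in>supp x. \<kappa>\<^sup>2 * a\<^sup>2)" using kb2 by (intro sum_mono) auto
      also have "\<dots> = real K * (\<kappa>\<^sup>2 * a\<^sup>2)" using cardT by simp
      finally have nx: "(norm x)\<^sup>2 \<le> real K * (\<kappa>\<^sup>2 * a\<^sup>2)" .
      have "(norm (Phi *v x))\<^sup>2 \<le> (1 + \<delta>) * (norm x)\<^sup>2" by (rule rip_hi[OF rip spU]) auto
      also have "\<dots> \<le> (1 + \<delta>) * (real K * (\<kappa>\<^sup>2 * a\<^sup>2))" using nx assms(3) by (intro mult_left_mono) auto
      finally have px: "(norm (Phi *v x))\<^sup>2 \<le> (1 + \<delta>) * (real K * (\<kappa>\<^sup>2 * a\<^sup>2))" .
      have "\<kappa>\<^sup>2 * V\<^sup>2 = (\<kappa>\<^sup>2 * \<delta> powr (-3/2) * V\<^sup>2) * e^3"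
        using powr_e[OF assms(3)] e_def by (simp add: algebra_simps)
      also have "\<dots> \<le> (norm (Phi *v x))\<^sup>2 * e^3"
        using assms(7) e0 unfolding \<kappa>_def V_def by (intro mult_right_mono) auto
      also have "\<dots> \<le> ((1 + \<delta>) * (real K * (\<kappa>\<^sup>2 * a\<^sup>2))) * e^3"
        using px e0 by (intro mult_right_mono) auto
      also have "\<dots> = \<kappa>\<^sup>2 * (e\<^sup>2 * (1 + e\<^sup>2) * (e * real K * a\<^sup>2))"
        using de by (simp add: power2_eq_square power3_eq_cube algebra_simps)
      finally have "\<kappa>\<^sup>2 * V\<^sup>2 \<le> \<kappa>\<^sup>2 * (e\<^sup>2 * (1 + e\<^sup>2) * (e * real K * a\<^sup>2))" .
      then have "V\<^sup>2 \<le> e\<^sup>2 * (1 + e\<^sup>2) * (e * real K * a\<^sup>2)" using k1 by simp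
      also have "\<dots> \<le> e\<^sup>2 * (1 + e\<^sup>2) * X\<^sup>2" using hK by (intro mult_left_mono) auto
      finally show ?thesis .
    qed
    have hD: "D \<ge> g\<^sup>2 / (1 + e\<^sup>2)" using stepA de by simp
    have fin: "D \<ge> (1 - 7 * e) * a\<^sup>2"
      by (rule final_arith[OF e0 e1 _ _ _ _ _ _ a0 A1pos _ hD hip1 hip2 hPS hW hPG hG hK hA hV])
        (auto simp: X_def W_def V_def PS_def PG_def G_def)
    show ?thesis using fin goalD xa e_def by simp
  qed
qed

end
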